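(* Let $m,n$ be positive integers. Every extreme point of the convex set $\Gamma^\pi_{m,n}$ of $m\times n$ centrosymmetric stochastic matrices can be written in the form $\frac{1}{2}(R+R^\pi)$ for some $m\times n$ rectangular permutation matrix $R$.
   Context: A real $m\times n$ matrix $A=(a_{i,j})$ is stochastic if all entries are nonnegative and every row sums to $1$. For $A\in M_{m,n}$, $A^\pi$ denotes the $m\times n$ matrix with $(A^\pi)_{i,j}=a_{m+1-i,n+1-j}$ (rotation by $180^\circ$); $A$ is centrosymmetric if $A=A^\pi$. $\Gamma^\pi_{m,n}$ is the set of $m\times n$ centrosymmetric stochastic matrices. A rectangular permutation matrix is an $m\times n$ $(0,1)$-matrix with exactly one $1$ in each row. *)

theory Defs
  imports "HOL-Analysis.Analysis"
begin

text \<open>An m x n real matrix is an element of real^'n^'m (rows indexed by 'm, columns by 'n),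
  where the index types are finite and linearly ordered; the order identifies each index type
  with the positions 1..m (resp. 1..n).\<close>

type_synonym ('n, 'm) mat = "((real, 'n) vec, 'm) vec"

definition rank :: "'a::{finite,linorder} \<Rightarrow> nat" where
  "rank i = card {k. k < i}"

text \<open>rank i is the 0-based position of i; the 180-degree rotation sends position p
  to position CARD - 1 - p.\<close>
definition rev_idx :: "'a::{finite,linorder} \<Rightarrow> 'a" where
  "rev_idx i = (THE j. rank j = CARD('a) - 1 - rank i)"

definition rot :: "('n::{finite,linorder}, 'm::{finite,linorder}) mat \<Rightarrow> ('n, 'm) mat" where
  "rot A = (\<chi> i j. A $ (rev_idx i) $ (rev_idx j))"

definition stochastic :: "('n::finite, 'm::finite) mat \<Rightarrow> bool" where
  "stochastic A \<longleftrightarrow> (\<forall>i j. 0 \<le> A $ i $ j) \<and> (\<forall>i. (\<Sum>j\<in>UNIV. A $ i $ j) = 1)"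

definition centrosymmetric :: "('n::{finite,linorder}, 'm::{finite,linorder}) mat \<Rightarrow> bool" where
  "centrosymmetric A \<longleftrightarrow> A = rot A"

definition Gamma_pi :: "('n::{finite,linorder}, 'm::{finite,linorder}) mat set" where
  "Gamma_pi = {A. centrosymmetric A \<and> stochastic A}"

definition rect_perm_matrix :: "('n::finite, 'm::finite) mat \<Rightarrow> bool" where
  "rect_perm_matrix R \<longleftrightarrow> (\<forall>i j. R $ i $ j = 0 \<or> R $ i $ j = 1) \<and>
     (\<forall>i. card {j. R $ i $ j = 1} = 1)"

end

theory Submission
  imports Defs
begin

lemma rank_less_card: "rank (i::'a::{finite,linorder}) < CARD('a)"
proof -
  have "{k. k < i} \<subset> UNIV" by auto
  then show ?thesis unfolding rank_def by (simp add: psubset_card_mono)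
qed

lemma rank_mono_strict: "(i::'a::{finite,linorder}) < j \<Longrightarrow> rank i < rank j"
proof -
  assume "i < j"
  then have "{k. k < i} \<subset> {k. k < j}" by auto
  then show ?thesis unfolding rank_def by (simp add: psubset_card_mono)
qed

lemma rank_inj: "inj (rank :: 'a::{finite,linorder} \<Rightarrow> nat)"
  by (metis injI linorder_neqE nat_neq_iff rank_mono_strict)

lemma rank_surj: "rank ` (UNIV::'a::{finite,linorder} set) = {0..<CARD('a)}"
proof -
  have "rank ` (UNIV::'a set) \<subseteq> {0..<CARD('a)}" using rank_less_card by auto
  moreover have "card (rank ` (UNIV::'a set)) = CARD('a)"
    using rank_inj card_image by blast
  ultimately show ?thesis
    by (metis card_atLeastLessThan card_subset_eq diff_zero finite_atLeastLessThan)
qed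

lemma rank_rev_idx: "rank (rev_idx (i::'a::{finite,linorder})) = CARD('a) - 1 - rank i"
proof -
  have "CARD('a) > 0" by simp
  then have "CARD('a) - 1 - rank i < CARD('a)" by linarith
  then have "CARD('a) - 1 - rank i \<in> rank ` (UNIV::'a set)" using rank_surj[where 'a='a] by simp
  then obtain j :: 'a where j: "rank j = CARD('a) - 1 - rank i" by auto
  have "rank (THE j::'a. rank j = CARD('a) - 1 - rank i) = CARD('a) - 1 - rank i"
  proof (rule theI[of _ j])
    show "rank j = CARD('a) - 1 - rank i" by (rule j)
  next
    fix y :: 'a assume "rank y = CARD('a) - 1 - rank i"
    then have "rank y = rank j" using j by simp
    then show "y = j" using rank_inj[where 'a='a] by (simp add: inj_eq)
  qed
  then show ?thesis unfolding rev_idx_def .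
qed

lemma rev_idx_rev_idx[simp]: "rev_idx (rev_idx (i::'a::{finite,linorder})) = i"
proof -
  have "rank (rev_idx (rev_idx i)) = rank i"
    using rank_rev_idx[of i] rank_rev_idx[of "rev_idx i"] rank_less_card[of i] by simp
  then show ?thesis using rank_inj[where 'a='a] by (simp add: inj_eq)
qed

lemma rev_idx_eq_iff[simp]: "rev_idx (i::'a::{finite,linorder}) = rev_idx j \<longleftrightarrow> i = j"
  by (metis rev_idx_rev_idx)

lemma rev_idx_swap: "rev_idx (k::'a::{finite,linorder}) = j \<longleftrightarrow> k = rev_idx j"
  by (metis rev_idx_rev_idx)

lemma bij_rev_idx: "bij (rev_idx :: 'a::{finite,linorder} \<Rightarrow> 'a)"
  by (rule o_bij[of rev_idx]) (auto simp: fun_eq_iff)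

lemma rot_nth[simp]: "rot A $ i $ j = A $ rev_idx i $ rev_idx j"
  unfolding rot_def by simp

lemma rot_rot[simp]: "rot (rot A) = A"
  by (simp add: vec_eq_iff)

lemma rot_add: "rot (A + B) = rot A + rot B"
  by (simp add: vec_eq_iff)

lemma sum_rev_idx: "(\<Sum>j\<in>UNIV. f (rev_idx j)) = (\<Sum>j\<in>UNIV. f j)"
  using sum.reindex_bij_betw[OF bij_rev_idx, of f] by simp

lemma rot_diff: "rot (A - B) = rot A - rot B"
  by (simp add: vec_eq_iff)

lemma key:
  fixes A :: "('n::{finite,linorder}, 'm::{finite,linorder}) mat"
  assumes ext: "A extreme_point_of Gamma_pi" and p1: "A$i$j1 > 0" and p2: "A$i$j2 > 0"
    and ne: "j1 \<noteq> j2"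
  shows "rev_idx i = i \<and> j2 = rev_idx j1"
proof (rule ccontr)
  assume nc: "\<not> (rev_idx i = i \<and> j2 = rev_idx j1)"
  from ext have AG: "A \<in> Gamma_pi"
    and noseg: "\<forall>a\<in>Gamma_pi. \<forall>b\<in>Gamma_pi. A \<notin> open_segment a b"
    by (auto simp: extreme_point_of_def)
  have Arot: "rot A = A" using AG unfolding Gamma_pi_def centrosymmetric_def by simp
  have cs: "A$x$y = A$(rev_idx x)$(rev_idx y)" for x y
    using arg_cong[OF Arot, of "\<lambda>M. M$x$y"] by simp
  have st: "stochastic A" using AG unfolding Gamma_pi_def by simp
  have nonneg: "0 \<le> A$x$y" for x y using st unfolding stochastic_def by simp
  have rows: "(\<Sum>y\<in>UNIV. A$x$y) = 1" for x using st unfolding stochastic_def by simp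
  define e where "e = min (A$i$j1) (A$i$j2) / 2"
  have epos: "e > 0" using p1 p2 unfolding e_def by simp
  have e1: "2*e \<le> A$i$j1" and e2: "2*e \<le> A$i$j2" unfolding e_def by auto
  define E :: "('n,'m) mat" where
    "E = (\<chi> x y. (if x = i \<and> y = j1 then e else 0) + (if x = i \<and> y = j2 then -e else 0))"
  have Enth: "E$x$y = (if x = i \<and> y = j1 then e else 0) + (if x = i \<and> y = j2 then -e else 0)" for x y
    unfolding E_def by simp
  have Esum: "(\<Sum>y\<in>UNIV. E$x$y) = 0" for x
  proof -
    have "(\<Sum>y\<in>UNIV. E$x$y) = (\<Sum>y\<in>UNIV. (if y = j1 then (if x = i then e else 0) else 0))
       + (\<Sum>y\<in>UNIV. (if y = j2 then (if x = i then -e else 0) else 0))"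
      unfolding Enth sum.distrib[symmetric] by (intro sum.cong) auto
    also have "\<dots> = 0" by simp
    finally show ?thesis .
  qed
  define D where "D = E + rot E"
  have rotD: "rot D = D" by (simp add: D_def rot_add add.commute)
  have Dnth: "D$x$y = E$x$y + E$(rev_idx x)$(rev_idx y)" for x y unfolding D_def by simp
  have Dsum: "(\<Sum>y\<in>UNIV. D$x$y) = 0" for x
  proof -
    have "(\<Sum>y\<in>UNIV. D$x$y) = (\<Sum>y\<in>UNIV. E$x$y) + (\<Sum>y\<in>UNIV. E$(rev_idx x)$(rev_idx y))"
      unfolding Dnth by (simp add: sum.distrib)
    also have "\<dots> = 0" using Esum sum_rev_idx[of "\<lambda>y. E$(rev_idx x)$y"] by simp
    finally show ?thesis .
  qed
  have Dnz: "D$i$j1 \<noteq> 0"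
  proof
    assume "D$i$j1 = 0"
    then show False using nc epos ne unfolding Dnth Enth by (auto split: if_splits)
  qed
  have Ebound: "\<bar>E$x$y\<bar> \<le> e" for x y using epos ne unfolding Enth by auto
  have Esupp: "E$x$y \<noteq> 0 \<Longrightarrow> 2*e \<le> A$x$y" for x y using e1 e2 unfolding Enth
    by (auto split: if_splits)
  have Dbound: "\<bar>D$x$y\<bar> \<le> A$x$y" for x y
  proof -
    have a: "\<bar>D$x$y\<bar> \<le> \<bar>E$x$y\<bar> + \<bar>E$(rev_idx x)$(rev_idx y)\<bar>" unfolding Dnth by simp
    show ?thesis
    proof (cases "E$x$y = 0 \<and> E$(rev_idx x)$(rev_idx y) = 0")
      case True then show ?thesis using a nonneg[of x y] by simp
    next
      case False
      then have "2*e \<le> A$x$y" using Esupp[of x y] Esupp[of "rev_idx x" "rev_idx y"] cs[of x y] by auto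
      then show ?thesis using a Ebound[of x y] Ebound[of "rev_idx x" "rev_idx y"] by linarith
    qed
  qed
  have G1: "A + D \<in> Gamma_pi"
    unfolding Gamma_pi_def centrosymmetric_def stochastic_def
  proof (intro CollectI conjI allI)
    show "A + D = rot (A + D)" by (simp add: rot_add Arot rotD)
    fix x y show "0 \<le> (A + D)$x$y" using Dbound[of x y] by simp
  next
    fix x show "(\<Sum>y\<in>UNIV. (A + D)$x$y) = 1" using rows[of x] Dsum[of x] by (simp add: sum.distrib)
  qed
  have G2: "A - D \<in> Gamma_pi"
    unfolding Gamma_pi_def centrosymmetric_def stochastic_def
  proof (intro CollectI conjI allI)
    show "A - D = rot (A - D)" by (simp add: rot_diff Arot rotD)
    fix x y show "0 \<le> (A - D)$x$y" using Dbound[of x y] by simp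
  next
    fix x show "(\<Sum>y\<in>UNIV. (A - D)$x$y) = 1" using rows[of x] Dsum[of x] by (simp add: sum_subtractf)
  qed
  have "A = midpoint (A - D) (A + D)" unfolding midpoint_def
    by (simp add: vec_eq_iff)
  moreover have "A - D \<noteq> A + D"
  proof
    assume "A - D = A + D"
    then have "(A - D)$i$j1 = (A + D)$i$j1" by (simp only:)
    then show False using Dnz by simp
  qed
  ultimately have "A \<in> open_segment (A - D) (A + D)" by (metis midpoint_in_open_segment)
  then show False using noseg G1 G2 by blast
qed

theorem mainTheorem1:
  fixes A :: "('n::{finite,linorder}, 'm::{finite,linorder}) mat"
  assumes "A extreme_point_of Gamma_pi"
  shows "\<exists>R :: ('n, 'm) mat. rect_perm_matrix R \<and> A = (1/2) *\<^sub>R (R + rot R)"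
proof -
  from assms have AG: "A \<in> Gamma_pi" by (auto simp: extreme_point_of_def)
  have Arot: "rot A = A" using AG unfolding Gamma_pi_def centrosymmetric_def by simp
  have cs: "A$x$y = A$(rev_idx x)$(rev_idx y)" for x y
    using arg_cong[OF Arot, of "\<lambda>M. M$x$y"] by simp
  have st: "stochastic A" using AG unfolding Gamma_pi_def by simp
  have nonneg: "0 \<le> A$x$y" for x y using st unfolding stochastic_def by simp
  have rows: "(\<Sum>y\<in>UNIV. A$x$y) = 1" for x using st unfolding stochastic_def by simp
  have ex: "\<exists>j. A$x$j > 0" for x
  proof (rule ccontr)
    assume "\<not> (\<exists>j. A$x$j > 0)"
    then have "A$x$j \<le> 0" for j by (simp add: not_less)
    then have "\<forall>j. A$x$j = 0" using nonneg[of x] by (simp add: order.antisym)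
    then show False using rows[of x] by simp
  qed
  define f where "f x = (SOME j. A$x$j > 0)" for x
  have fpos: "A$x$(f x) > 0" for x unfolding f_def using someI_ex[OF ex[of x]] .
  have only: "rev_idx x = x \<and> k = rev_idx (f x)" if "A$x$k > 0" "k \<noteq> f x" for x k
    using key[OF assms fpos[of x] that(1)] that(2) by auto
  define R :: "('n,'m) mat" where "R = (\<chi> x k. if k = f x then 1 else 0)"
  have Rnth: "R$x$k = (if k = f x then 1 else 0)" for x k unfolding R_def by simp
  have RP: "rect_perm_matrix R"
    unfolding rect_perm_matrix_def Rnth
  proof (intro conjI allI)
    fix x
    have "{k. (if k = f x then 1 else 0) = (1::real)} = {f x}" by auto
    then show "card {k. (if k = f x then 1 else 0) = (1::real)} = 1" by simp
  qed auto
  have main: "A$x$k = (R$x$k + R$(rev_idx x)$(rev_idx k))/2" for x k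
  proof (cases "rev_idx x = x")
    case False
    have zero: "A$x$k' = 0" if "k' \<noteq> f x" for k'
      using only[of x k'] False that nonneg[of x k'] by force
    have eq: "A$x$k' = (if k' = f x then A$x$(f x) else 0)" for k' using zero by auto
    have "(\<Sum>y\<in>UNIV. A$x$y) = (\<Sum>y\<in>UNIV. (if y = f x then A$x$(f x) else 0))"
      by (rule sum.cong) (rule refl, rule eq)
    then have "(\<Sum>y\<in>UNIV. A$x$y) = A$x$(f x)" by simp
    then have one: "A$x$(f x) = 1" using rows[of x] by simp
    have "A$(rev_idx x)$(rev_idx (f x)) > 0" using fpos[of x] cs[of x "f x"] by simp
    moreover have "rev_idx (rev_idx x) \<noteq> rev_idx x" using False by auto
    ultimately have frx: "f (rev_idx x) = rev_idx (f x)"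
      using only[of "rev_idx x" "rev_idx (f x)"] by (metis)
    show ?thesis using one zero[of k] unfolding Rnth frx by auto
  next
    case True
    note xfix = True
    have zero: "A$x$k' = 0" if "k' \<noteq> f x" "k' \<noteq> rev_idx (f x)" for k'
      using only[of x k'] that nonneg[of x k'] by force
    have sym: "A$x$(rev_idx (f x)) = A$x$(f x)" using cs[of x "f x"] True by simp
    have Rr: "R$(rev_idx x)$(rev_idx k) = (if k = rev_idx (f x) then 1 else 0)"
      unfolding Rnth True rev_idx_swap by simp
    show ?thesis
    proof (cases "rev_idx (f x) = f x")
      case True
      have eq: "A$x$k' = (if k' = f x then A$x$(f x) else 0)" for k' using zero True by auto
      have "(\<Sum>y\<in>UNIV. A$x$y) = (\<Sum>y\<in>UNIV. (if y = f x then A$x$(f x) else 0))"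
        by (rule sum.cong) (rule refl, rule eq)
      then have "(\<Sum>y\<in>UNIV. A$x$y) = A$x$(f x)" by simp
      then have one: "A$x$(f x) = 1" using rows[of x] by simp
      show ?thesis using one zero[of k] True Rr unfolding Rnth by auto
    next
      case False
      have eq: "A$x$k' = (if k' = f x then A$x$(f x) else 0) + (if k' = rev_idx (f x) then A$x$(f x) else 0)" for k'
        using zero False sym by auto
      have "(\<Sum>y\<in>UNIV. A$x$y) = (\<Sum>y\<in>UNIV. (if y = f x then A$x$(f x) else 0) + (if y = rev_idx (f x) then A$x$(f x) else 0))"
        by (rule sum.cong) (rule refl, rule eq)
      then have "(\<Sum>y\<in>UNIV. A$x$y) = 2 * A$x$(f x)" by (simp add: sum.distrib)
      then have half: "A$x$(f x) = 1/2" using rows[of x] by simp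
      show ?thesis using half zero[of k] False sym Rr unfolding Rnth by auto
    qed
  qed
  have "A = (1/2) *\<^sub>R (R + rot R)"
    by (simp add: vec_eq_iff main)
  then show ?thesis using RP by blast
qed

end
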